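(* Let $\psi\in L^2(\mu)$ be a non-constant real-valued function with $|\psi|=1$, and let $\hat\psi$ be the orthogonal projection $\phi\mapsto\langle\phi,\psi\rangle\psi$. Then $$\big\|[\mathcal D,\pi(\hat\psi)]\big\| = \big\|K\hat\psi-\hat\psi K\big\| = \sup_{\phi\in L^2(\mu),\,|\phi|=1}\sqrt{\langle\phi,\psi\rangle^2-2\langle\phi,\psi\rangle\langle K\phi,\psi\rangle\langle K\psi,\psi\rangle+\langle K\phi,\psi\rangle^2}.$$
   Context: $\Omega=\{0,1\}^{\mathbb N}$ with the shift $\sigma(x_1,x_2,\dots)=(x_2,x_3,\dots)$; for $a\in\{0,1\}$ and $x\in\Omega$, $ax=(a,x_1,x_2,\dots)$. $\mu$ is the measure of maximal entropy of $\sigma$ (the product of the uniform measure $(1/2,1/2)$ on $\{0,1\}$). $L^2(\mu)$ is the real Hilbert space of square-integrable real functions, with inner product $\langle\cdot,\cdot\rangle$ and norm $|\cdot|$. The Ruelle operator is $L\phi(x)=\frac12(\phi(0x)+\phi(1x))$ and the Koopman operator is $K\phi=\phi\circ\sigma$; both are bounded on $L^2(\mu)$ and $K$ is the adjoint of $L$. On $\mathcal H=L^2(\mu)\times L^2(\mu)$, with norm $|(\phi_1,\phi_2)|^2=|\phi_1|^2+|\phi_2|^2$, the Dirac operator is $\mathcal D(\phi_1,\phi_2)=(K\phi_2,L\phi_1)$, i.e. $\mathcal D=\begin{pmatrix}0&K\\ L&0\end{pmatrix}$, and for a bounded operator $A$ on $L^2(\mu)$, $\pi(A)=\begin{pmatrix}A&0\\0&A\end{pmatrix}$.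 Then $[\mathcal D,\pi(A)]=\mathcal D\pi(A)-\pi(A)\mathcal D=\begin{pmatrix}0&KA-AK\\ LA-AL&0\end{pmatrix}$. $\|\cdot\|$ denotes the operator norm. *)

theory Defs
  imports "HOL-Probability.Probability"
begin

type_synonym omega = "nat \<Rightarrow> bool"

text \<open>The one-sided full shift on two symbols and its maximal entropy measure
  (the Bernoulli(1/2,1/2) product measure).\<close>

definition shift :: "omega \<Rightarrow> omega" where
  "shift x = (\<lambda>n. x (Suc n))"

definition prepend :: "bool \<Rightarrow> omega \<Rightarrow> omega" where
  "prepend a x = (\<lambda>n. case n of 0 \<Rightarrow> a | Suc m \<Rightarrow> x m)"

definition mu :: "omega measure" where
  "mu = (\<Pi>\<^sub>M i\<in>UNIV. measure_pmf (bernoulli_pmf (1/2)))"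

text \<open>Real square-integrable functions (representatives of elements of L^2(mu)).\<close>

definition L2 :: "(omega \<Rightarrow> real) set" where
  "L2 = {f. f \<in> borel_measurable mu \<and> integrable mu (\<lambda>x. (f x)\<^sup>2)}"

definition l2inner :: "(omega \<Rightarrow> real) \<Rightarrow> (omega \<Rightarrow> real) \<Rightarrow> real" where
  "l2inner f g = (\<integral>x. f x * g x \<partial>mu)"

definition l2norm :: "(omega \<Rightarrow> real) \<Rightarrow> real" where
  "l2norm f = sqrt (l2inner f f)"

definition ruelle :: "(omega \<Rightarrow> real) \<Rightarrow> (omega \<Rightarrow> real)" where
  "ruelle f = (\<lambda>x. (f (prepend False x) + f (prepend True x)) / 2)"

definition koopman :: "(omega \<Rightarrow> real) \<Rightarrow> (omega \<Rightarrow> real)" where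
  "koopman f = f \<circ> shift"

definition opnorm :: "((omega \<Rightarrow> real) \<Rightarrow> (omega \<Rightarrow> real)) \<Rightarrow> real" where
  "opnorm A = Sup ((\<lambda>\<phi>. l2norm (A \<phi>)) ` {\<phi> \<in> L2. l2norm \<phi> = 1})"

definition hnorm :: "(omega \<Rightarrow> real) \<times> (omega \<Rightarrow> real) \<Rightarrow> real" where
  "hnorm p = sqrt ((l2norm (fst p))\<^sup>2 + (l2norm (snd p))\<^sup>2)"

definition hopnorm ::
  "((omega \<Rightarrow> real) \<times> (omega \<Rightarrow> real) \<Rightarrow> (omega \<Rightarrow> real) \<times> (omega \<Rightarrow> real)) \<Rightarrow> real" where
  "hopnorm T = Sup ((\<lambda>p. hnorm (T p)) ` {p. fst p \<in> L2 \<and> snd p \<in> L2 \<and> hnorm p = 1})"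

definition dirac :: "(omega \<Rightarrow> real) \<times> (omega \<Rightarrow> real) \<Rightarrow> (omega \<Rightarrow> real) \<times> (omega \<Rightarrow> real)" where
  "dirac p = (koopman (snd p), ruelle (fst p))"

definition piop :: "((omega \<Rightarrow> real) \<Rightarrow> (omega \<Rightarrow> real)) \<Rightarrow>
    (omega \<Rightarrow> real) \<times> (omega \<Rightarrow> real) \<Rightarrow> (omega \<Rightarrow> real) \<times> (omega \<Rightarrow> real)" where
  "piop A p = (A (fst p), A (snd p))"

definition dirac_comm :: "((omega \<Rightarrow> real) \<Rightarrow> (omega \<Rightarrow> real)) \<Rightarrow>
    (omega \<Rightarrow> real) \<times> (omega \<Rightarrow> real) \<Rightarrow> (omega \<Rightarrow> real) \<times> (omega \<Rightarrow> real)" where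
  "dirac_comm A p =
     (let u = dirac (piop A p); v = piop A (dirac p)
      in (\<lambda>x. fst u x - fst v x, \<lambda>x. snd u x - snd v x))"

definition proj :: "(omega \<Rightarrow> real) \<Rightarrow> (omega \<Rightarrow> real) \<Rightarrow> (omega \<Rightarrow> real)" where
  "proj \<psi> \<phi> = (\<lambda>x. l2inner \<phi> \<psi> * \<psi> x)"

end

theory Submission
  imports Defs
begin
abbreviation "BM \<equiv> measure_pmf (bernoulli_pmf (1/2))"
interpretation BS: sequence_space BM
  by unfold_locales
lemma mu_eq: "mu = BS.S" unfolding mu_def by simp
lemma space_mu[simp]: "space mu = UNIV" unfolding mu_def by (simp add: space_PiM)
lemma prob_mu: "prob_space mu" unfolding mu_def by (simp add: BS.prob_space_axioms)
lemma prepend_eq: "prepend a = case_nat a" unfolding prepend_def by (auto simp: fun_eq_iff split: nat.split)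
lemma meas_prepend[measurable]: "prepend a \<in> measurable mu mu"
  unfolding mu_def prepend_eq  by measurable
lemma meas_shift[measurable]: "shift \<in> measurable mu mu"
  unfolding mu_def shift_def
  by (rule measurable_PiM_single'[where f="\<lambda>i x. x (Suc i)", simplified]) (auto simp: space_PiM)
lemma meas_iter: "(\<lambda>(s, \<omega>). case_nat s \<omega>) \<in> measurable (BM \<Otimes>\<^sub>M BS.S) BS.S"
  by measurable

lemma distr_shift: "distr mu mu shift = mu"
proof -
  have "distr mu mu shift = distr (distr (BM \<Otimes>\<^sub>M BS.S) BS.S (\<lambda>(s, \<omega>). case_nat s \<omega>)) BS.S shift"
    unfolding mu_eq BS.PiM_iter ..
  also have "\<dots> = distr (BM \<Otimes>\<^sub>M BS.S) BS.S (shift \<circ> (\<lambda>(s, \<omega>). case_nat s \<omega>))"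
    by (rule distr_distr) (use meas_shift meas_iter in \<open>auto simp: mu_eq\<close>)
  also have "\<dots> = distr (BM \<Otimes>\<^sub>M BS.S) BS.S snd"
    by (rule distr_cong) (auto simp: shift_def)
  also have "\<dots> = BS.S"
  proof -
    interpret P: pair_sigma_finite BM BS.S by unfold_locales
    have "distr (BM \<Otimes>\<^sub>M BS.S) BS.S snd = distr (distr (BS.S \<Otimes>\<^sub>M BM) (BM \<Otimes>\<^sub>M BS.S) (\<lambda>(x,y). (y,x))) BS.S snd"
      by (simp add: P.distr_pair_swap[symmetric])
    also have "\<dots> = distr (BS.S \<Otimes>\<^sub>M BM) BS.S (snd \<circ> (\<lambda>(x,y). (y,x)))"
      by (rule distr_distr) auto
    also have "\<dots> = distr (BS.S \<Otimes>\<^sub>M BM) BS.S fst"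
      by (rule distr_cong) auto
    also have "\<dots> = BS.S" using prob_space_measure_pmf by (rule prob_space.distr_pair_fst)
    finally show ?thesis .
  qed
  finally show ?thesis by (simp add: mu_eq)
qed

lemma shift_integrable:
  fixes g :: "omega \<Rightarrow> real"
  assumes "integrable mu g" shows "integrable mu (\<lambda>x. g (shift x))"
proof -
  have gm: "g \<in> borel_measurable mu" using assms by auto
  have "integrable (distr mu mu shift) g" using assms by (simp add: distr_shift)
  then show ?thesis using integrable_distr_eq[OF meas_shift gm] by simp
qed
lemma shift_integral:
  fixes g :: "omega \<Rightarrow> real"
  assumes "g \<in> borel_measurable mu" shows "(\<integral>x. g (shift x) \<partial>mu) = (\<integral>x. g x \<partial>mu)"
  using integral_distr[OF meas_shift assms] by (simp add: distr_shift)

lemma prepend_integral: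
  fixes h :: "omega \<Rightarrow> real"
  assumes h: "integrable mu h"
  shows "integrable mu (\<lambda>x. h (prepend a x))"
    and "(\<integral>x. h x \<partial>mu) = (\<integral>x. (h (prepend False x) + h (prepend True x)) / 2 \<partial>mu)"
proof -
  interpret P: pair_sigma_finite BM BS.S by unfold_locales
  have hm[measurable]: "h \<in> borel_measurable BS.S" using h by (simp add: mu_eq)
  have "integrable (distr (BM \<Otimes>\<^sub>M BS.S) BS.S (\<lambda>(s, \<omega>). case_nat s \<omega>)) h"
    using h by (simp add: BS.PiM_iter mu_eq)
  then have hi: "integrable (BM \<Otimes>\<^sub>M BS.S) (\<lambda>p. h (case_prod case_nat p))"
    by (subst (asm) integrable_distr_eq) (use meas_iter in auto)
  then have hi': "integrable (BM \<Otimes>\<^sub>M BS.S) (\<lambda>(s, \<omega>). h (case_nat s \<omega>))"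
    by (simp add: split_beta')
  have ae: "AE s in BM. integrable BS.S (\<lambda>\<omega>. h (case_nat s \<omega>))"
    using P.AE_integrable_fst'[OF hi] by simp
  then have ints: "\<And>s. integrable BS.S (\<lambda>\<omega>. h (case_nat s \<omega>))"
    by (simp add: AE_measure_pmf_iff set_pmf_bernoulli)
  then show "integrable mu (\<lambda>x. h (prepend a x))" by (simp add: mu_eq prepend_eq)
  have "(\<integral>x. h x \<partial>mu) = (\<integral>x. h x \<partial>distr (BM \<Otimes>\<^sub>M BS.S) BS.S (\<lambda>(s, \<omega>). case_nat s \<omega>))"
    by (simp add: BS.PiM_iter mu_eq)
  also have "\<dots> = (\<integral>p. h (case_prod case_nat p) \<partial>(BM \<Otimes>\<^sub>M BS.S))"
    by (rule integral_distr) (use meas_iter in auto)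
  also have "\<dots> = (\<integral>s. (\<integral>\<omega>. h (case_nat s \<omega>) \<partial>BS.S) \<partial>BM)"
    using P.integral_fst'[OF hi] by (simp add: split_beta')
  also have "\<dots> = (\<Sum>s\<in>UNIV. pmf (bernoulli_pmf (1/2)) s *\<^sub>R (\<integral>\<omega>. h (case_nat s \<omega>) \<partial>BS.S))"
    by (rule integral_measure_pmf) auto
  also have "\<dots> = ((\<integral>\<omega>. h (case_nat False \<omega>) \<partial>BS.S) + (\<integral>\<omega>. h (case_nat True \<omega>) \<partial>BS.S)) / 2"
    by (simp add: UNIV_bool)
  also have "\<dots> = (\<integral>x. (h (prepend False x) + h (prepend True x)) / 2 \<partial>mu)"
    using ints by (simp add: mu_eq prepend_eq)
  finally show "(\<integral>x. h x \<partial>mu) = (\<integral>x. (h (prepend False x) + h (prepend True x)) / 2 \<partial>mu)" .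
qed

lemma shift_prepend[simp]: "shift (prepend a x) = x"
  by (simp add: shift_def prepend_def)

lemma L2_D:
  assumes "f \<in> L2" shows "f \<in> borel_measurable mu" "integrable mu (\<lambda>x. (f x)\<^sup>2)"
  using assms by (auto simp: L2_def)

lemma L2_prod_int:
  assumes "f \<in> L2" "g \<in> L2" shows "integrable mu (\<lambda>x. f x * g x)"
proof (rule Bochner_Integration.integrable_bound)
  show "integrable mu (\<lambda>x. (f x)\<^sup>2 + (g x)\<^sup>2)" using assms by (auto simp: L2_def)
  show "(\<lambda>x. f x * g x) \<in> borel_measurable mu" using assms by (auto simp: L2_def)
  show "AE x in mu. norm (f x * g x) \<le> norm ((f x)\<^sup>2 + (g x)\<^sup>2)"
  proof (intro AE_I2)
    fix x
    have "2 * \<bar>f x\<bar> * \<bar>g x\<bar> \<le> \<bar>f x\<bar>\<^sup>2 + \<bar>g x\<bar>\<^sup>2" by (rule sum_squares_bound)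
    moreover have "0 \<le> \<bar>f x\<bar> * \<bar>g x\<bar>" by simp
    ultimately have "\<bar>f x\<bar> * \<bar>g x\<bar> \<le> (f x)\<^sup>2 + (g x)\<^sup>2"
      using power2_abs[of "f x"] power2_abs[of "g x"] zero_le_power2[of "f x"] zero_le_power2[of "g x"] by linarith
    then show "norm (f x * g x) \<le> norm ((f x)\<^sup>2 + (g x)\<^sup>2)" by (simp add: abs_mult)
  qed
qed

lemma L2_lin:
  assumes "f \<in> L2" "g \<in> L2" shows "(\<lambda>x. a * f x - b * g x) \<in> L2"
proof -
  have m: "(\<lambda>x. a * f x - b * g x) \<in> borel_measurable mu" using assms by (auto simp: L2_def)
  have "integrable mu (\<lambda>x. (a * f x - b * g x)\<^sup>2)"
  proof (rule Bochner_Integration.integrable_bound)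
    show "integrable mu (\<lambda>x. 2 * a\<^sup>2 * (f x)\<^sup>2 + 2 * b\<^sup>2 * (g x)\<^sup>2)" using assms by (auto simp: L2_def)
    show "(\<lambda>x. (a * f x - b * g x)\<^sup>2) \<in> borel_measurable mu" using m by auto
    show "AE x in mu. norm ((a * f x - b * g x)\<^sup>2) \<le> norm (2 * a\<^sup>2 * (f x)\<^sup>2 + 2 * b\<^sup>2 * (g x)\<^sup>2)"
    proof (intro AE_I2)
      fix x
      have "0 \<le> (a * f x + b * g x)\<^sup>2" by simp
      then have "(a * f x - b * g x)\<^sup>2 \<le> 2 * a\<^sup>2 * (f x)\<^sup>2 + 2 * b\<^sup>2 * (g x)\<^sup>2"
        by (simp add: power2_eq_square algebra_simps)
      moreover have "0 \<le> 2 * a\<^sup>2 * (f x)\<^sup>2 + 2 * b\<^sup>2 * (g x)\<^sup>2" by simp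
      ultimately show "norm ((a * f x - b * g x)\<^sup>2) \<le> norm (2 * a\<^sup>2 * (f x)\<^sup>2 + 2 * b\<^sup>2 * (g x)\<^sup>2)" by simp
    qed
  qed
  with m show ?thesis by (simp add: L2_def)
qed

lemma L2_zero: "(\<lambda>x. 0) \<in> L2" by (simp add: L2_def)

lemma L2_one: "(\<lambda>x. 1) \<in> L2"
proof -
  interpret prob_space mu by (rule prob_mu)
  show ?thesis by (simp add: L2_def)
qed

lemma koopman_L2: assumes "f \<in> L2" shows "koopman f \<in> L2"
proof -
  have "integrable mu (\<lambda>x. (f (shift x))\<^sup>2)"
    using shift_integrable[of "\<lambda>x. (f x)\<^sup>2"] assms by (simp add: L2_def)
  moreover have "(\<lambda>x. f (shift x)) \<in> borel_measurable mu"
    using measurable_compose[OF meas_shift L2_D(1)[OF assms]] by simp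
  ultimately show ?thesis by (simp add: L2_def koopman_def o_def)
qed

lemma avg_sq: "((u + v) / 2)\<^sup>2 \<le> u\<^sup>2 + (v::real)\<^sup>2"
proof -
  have "0 \<le> (u - v)\<^sup>2" "0 \<le> u\<^sup>2" "0 \<le> v\<^sup>2" by simp_all
  moreover have "(u + v)\<^sup>2 + (u - v)\<^sup>2 = 2 * u\<^sup>2 + 2 * v\<^sup>2" by algebra
  moreover have "((u + v) / 2)\<^sup>2 = (u + v)\<^sup>2 / 4" by (simp add: power_divide)
  ultimately show ?thesis by linarith
qed

lemma ruelle_L2: assumes "f \<in> L2" shows "ruelle f \<in> L2"
proof -
  have fm[measurable]: "f \<in> borel_measurable mu" using assms by (simp add: L2_def)
  have fi: "integrable mu (\<lambda>x. (f x)\<^sup>2)" using assms by (simp add: L2_def)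
  have m: "ruelle f \<in> borel_measurable mu" unfolding ruelle_def
    by (intro borel_measurable_divide borel_measurable_add measurable_compose[OF meas_prepend fm]) simp
  have "integrable mu (\<lambda>x. (ruelle f x)\<^sup>2)"
  proof (rule Bochner_Integration.integrable_bound)
    show "integrable mu (\<lambda>x. (f (prepend False x))\<^sup>2 + (f (prepend True x))\<^sup>2)"
      by (intro Bochner_Integration.integrable_add prepend_integral(1)[OF fi])
    show "(\<lambda>x. (ruelle f x)\<^sup>2) \<in> borel_measurable mu" using m by auto
    show "AE x in mu. norm ((ruelle f x)\<^sup>2) \<le> norm ((f (prepend False x))\<^sup>2 + (f (prepend True x))\<^sup>2)"
    proof (intro AE_I2)
      fix x
      have "(ruelle f x)\<^sup>2 \<le> (f (prepend False x))\<^sup>2 + (f (prepend True x))\<^sup>2"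
        unfolding ruelle_def by (rule avg_sq)
      then show "norm ((ruelle f x)\<^sup>2) \<le> norm ((f (prepend False x))\<^sup>2 + (f (prepend True x))\<^sup>2)" by simp
    qed
  qed
  with m show ?thesis by (simp add: L2_def)
qed

lemma ip_sym: "l2inner f g = l2inner g f"
  unfolding l2inner_def by (simp add: mult.commute)

lemma ip_lin:
  assumes "f \<in> L2" "g \<in> L2" "h \<in> L2"
  shows "l2inner (\<lambda>x. a * f x - b * g x) h = a * l2inner f h - b * l2inner g h"
proof -
  have "l2inner (\<lambda>x. a * f x - b * g x) h = (\<integral>x. a * (f x * h x) - b * (g x * h x) \<partial>mu)"
    unfolding l2inner_def by (simp add: algebra_simps)
  also have "\<dots> = a * l2inner f h - b * l2inner g h"
    using L2_prod_int[OF assms(1,3)] L2_prod_int[OF assms(2,3)] by (simp add: l2inner_def)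
  finally show ?thesis .
qed

lemma ip_nonneg: "0 \<le> l2inner f f"
  unfolding l2inner_def by (rule integral_nonneg_AE) simp

lemma l2norm_sq: "(l2norm f)\<^sup>2 = l2inner f f"
  unfolding l2norm_def using ip_nonneg by simp

lemma koopman_iso:
  assumes "f \<in> L2" "g \<in> L2" shows "l2inner (koopman f) (koopman g) = l2inner f g"
  unfolding l2inner_def koopman_def o_def
  by (rule shift_integral[of "\<lambda>x. f x * g x"]) (use assms in \<open>auto simp: L2_def\<close>)

lemma adjoint:
  assumes "f \<in> L2" "g \<in> L2" shows "l2inner (ruelle f) g = l2inner f (koopman g)"
proof -
  have "integrable mu (\<lambda>x. f x * koopman g x)" by (rule L2_prod_int[OF assms(1) koopman_L2[OF assms(2)]])
  then have "l2inner f (koopman g) = (\<integral>x. (f (prepend False x) * g x + f (prepend True x) * g x) / 2 \<partial>mu)"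
    unfolding l2inner_def by (subst prepend_integral(2)) (auto simp: koopman_def)
  also have "\<dots> = l2inner (ruelle f) g"
    unfolding l2inner_def ruelle_def by (simp add: field_simps)
  finally show ?thesis by simp
qed

lemma quad_disc:
  fixes A B C :: real
  assumes "A \<ge> 0" "\<And>t. 0 \<le> t\<^sup>2 * A - 2 * t * B + C"
  shows "B\<^sup>2 \<le> A * C"
proof (cases "A = 0")
  case True
  show ?thesis
  proof (rule ccontr)
    assume "\<not> ?thesis"
    then have "B \<noteq> 0" using True by simp
    have "0 \<le> ((C + 1) / (2 * B))\<^sup>2 * A - 2 * ((C + 1) / (2 * B)) * B + C" by (rule assms(2))
    with True \<open>B \<noteq> 0\<close> show False by simp
  qed
next
  case False
  then have "A > 0" using assms(1) by simp
  have "0 \<le> (B / A)\<^sup>2 * A - 2 * (B / A) * B + C" by (rule assms(2))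
  then have "0 \<le> C - B\<^sup>2 / A" using \<open>A > 0\<close> by (simp add: power2_eq_square field_simps)
  then show ?thesis using \<open>A > 0\<close> by (simp add: field_simps)
qed

lemma cauchy_schwarz:
  assumes "f \<in> L2" "g \<in> L2" shows "\<bar>l2inner f g\<bar> \<le> l2norm f * l2norm g"
proof -
  have "(l2inner f g)\<^sup>2 \<le> l2inner f f * l2inner g g"
  proof (rule quad_disc[OF ip_nonneg])
    fix t
    have L: "(\<lambda>x. t * f x - 1 * g x) \<in> L2" by (rule L2_lin[OF assms])
    have "0 \<le> l2inner (\<lambda>x. t * f x - 1 * g x) (\<lambda>x. t * f x - 1 * g x)" by (rule ip_nonneg)
    also have "\<dots> = t * l2inner f (\<lambda>x. t * f x - 1 * g x) - l2inner g (\<lambda>x. t * f x - 1 * g x)"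
      using ip_lin[OF assms L, of t 1] by simp
    also have "\<dots> = t * (t * l2inner f f - l2inner g f) - (t * l2inner f g - l2inner g g)"
    proof -
      have "l2inner f (\<lambda>x. t * f x - 1 * g x) = t * l2inner f f - 1 * l2inner g f"
        using ip_lin[OF assms assms(1), of t 1] ip_sym[of f "\<lambda>x. t * f x - 1 * g x"] by simp
      moreover have "l2inner g (\<lambda>x. t * f x - 1 * g x) = t * l2inner f g - 1 * l2inner g g"
        using ip_lin[OF assms assms(2), of t 1] ip_sym[of g "\<lambda>x. t * f x - 1 * g x"] by simp
      ultimately show ?thesis by simp
    qed
    also have "\<dots> = t\<^sup>2 * l2inner f f - 2 * t * l2inner f g + l2inner g g"
      using ip_sym[of g f] by (simp add: power2_eq_square algebra_simps)
    finally show "0 \<le> t\<^sup>2 * l2inner f f - 2 * t * l2inner f g + l2inner g g" .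
  qed
  then have "sqrt ((l2inner f g)\<^sup>2) \<le> sqrt (l2inner f f * l2inner g g)" by (rule real_sqrt_le_mono)
  then show ?thesis by (simp add: l2norm_def real_sqrt_mult)
qed

lemma ip_scale: "l2inner (\<lambda>x. c * f x) g = c * l2inner f g"
  unfolding l2inner_def by (simp add: mult.assoc)

lemma l2norm_scale: "l2norm (\<lambda>x. c * f x) = \<bar>c\<bar> * l2norm f"
proof -
  have "l2inner (\<lambda>x. c * f x) (\<lambda>x. c * f x) = c\<^sup>2 * l2inner f f"
    using ip_scale[of c f "\<lambda>x. c * f x"] ip_scale[of c f f] ip_sym[of f "\<lambda>x. c * f x"]
    by (simp add: power2_eq_square)
  then show ?thesis by (simp add: l2norm_def real_sqrt_mult)
qed

lemma L2_scale: assumes "f \<in> L2" shows "(\<lambda>x. c * f x) \<in> L2"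
  using L2_lin[OF assms assms, of c 0] by simp

lemma l2norm_zero: "l2norm (\<lambda>x. 0) = 0" by (simp add: l2norm_def l2inner_def)

lemma l2norm_nonneg: "0 \<le> l2norm f" using ip_nonneg[of f] by (simp add: l2norm_def)

lemma koopman_norm: assumes "f \<in> L2" shows "l2norm (koopman f) = l2norm f"
  unfolding l2norm_def using koopman_iso[OF assms assms] by simp

definition CK :: "(omega \<Rightarrow> real) \<Rightarrow> (omega \<Rightarrow> real) \<Rightarrow> (omega \<Rightarrow> real)" where
  "CK \<psi> \<phi> = (\<lambda>x. l2inner \<phi> \<psi> * koopman \<psi> x - l2inner (koopman \<phi>) \<psi> * \<psi> x)"
definition CL :: "(omega \<Rightarrow> real) \<Rightarrow> (omega \<Rightarrow> real) \<Rightarrow> (omega \<Rightarrow> real)" where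
  "CL \<psi> \<phi> = (\<lambda>x. l2inner \<phi> \<psi> * ruelle \<psi> x - l2inner (ruelle \<phi>) \<psi> * \<psi> x)"

lemma CK_eq: "(\<lambda>\<phi> x. koopman (proj \<psi> \<phi>) x - proj \<psi> (koopman \<phi>) x) = CK \<psi>"
  by (auto simp: fun_eq_iff CK_def koopman_def proj_def)

lemma comm_eq: "dirac_comm (proj \<psi>) = (\<lambda>p. (CK \<psi> (snd p), CL \<psi> (fst p)))"
  by (auto simp: fun_eq_iff CK_def CL_def koopman_def proj_def dirac_comm_def dirac_def piop_def
      ruelle_def Let_def field_simps)

lemma CK_L2: assumes "\<psi> \<in> L2" "\<phi> \<in> L2" shows "CK \<psi> \<phi> \<in> L2"
  unfolding CK_def by (rule L2_lin[OF koopman_L2[OF assms(1)] assms(1)])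

lemma CL_L2: assumes "\<psi> \<in> L2" "\<phi> \<in> L2" shows "CL \<psi> \<phi> \<in> L2"
  unfolding CL_def by (rule L2_lin[OF ruelle_L2[OF assms(1)] assms(1)])

lemma CK_norm:
  assumes "\<psi> \<in> L2" "l2norm \<psi> = 1" "\<phi> \<in> L2"
  shows "l2norm (CK \<psi> \<phi>) = sqrt ((l2inner \<phi> \<psi>)\<^sup>2
                 - 2 * l2inner \<phi> \<psi> * l2inner (koopman \<phi>) \<psi> * l2inner (koopman \<psi>) \<psi>
                 + (l2inner (koopman \<phi>) \<psi>)\<^sup>2)"
proof -
  define a where "a = l2inner \<phi> \<psi>"
  define b where "b = l2inner (koopman \<phi>) \<psi>"
  define c where "c = l2inner (koopman \<psi>) \<psi>"
  have K: "koopman \<psi> \<in> L2" using koopman_L2[OF assms(1)] .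
  have C: "CK \<psi> \<phi> \<in> L2" using CK_L2[OF assms(1,3)] .
  have pp: "l2inner \<psi> \<psi> = 1" using l2norm_sq[of \<psi>] assms(2) by simp
  have kk: "l2inner (koopman \<psi>) (koopman \<psi>) = 1" using koopman_iso[OF assms(1,1)] pp by simp
  have e: "CK \<psi> \<phi> = (\<lambda>x. a * koopman \<psi> x - b * \<psi> x)" unfolding CK_def a_def b_def ..
  have "l2inner (CK \<psi> \<phi>) (CK \<psi> \<phi>) = a * l2inner (koopman \<psi>) (CK \<psi> \<phi>) - b * l2inner \<psi> (CK \<psi> \<phi>)"
    using ip_lin[OF K assms(1) C, of a b] e by simp
  also have "l2inner (koopman \<psi>) (CK \<psi> \<phi>) = a - b * c"
    using ip_lin[OF K assms(1) K, of a b] e ip_sym[of "koopman \<psi>" "CK \<psi> \<phi>"] kk ip_sym[of \<psi> "koopman \<psi>"]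
    by (simp add: c_def)
  also have "l2inner \<psi> (CK \<psi> \<phi>) = a * c - b"
    using ip_lin[OF K assms(1) assms(1), of a b] e ip_sym[of \<psi> "CK \<psi> \<phi>"] pp
    by (simp add: c_def)
  finally have "l2inner (CK \<psi> \<phi>) (CK \<psi> \<phi>) = a\<^sup>2 - 2 * a * b * c + b\<^sup>2"
    by (simp add: power2_eq_square algebra_simps)
  then show ?thesis by (simp add: l2norm_def a_def b_def c_def)
qed

lemma CK_zero:
  assumes "\<psi> \<in> L2" "\<phi> \<in> L2" "l2norm \<phi> = 0"
  shows "CK \<psi> \<phi> = (\<lambda>x. 0)"
proof -
  have "\<bar>l2inner \<phi> \<psi>\<bar> \<le> 0" using cauchy_schwarz[OF assms(2,1)] assms(3) by simp
  moreover have "\<bar>l2inner (koopman \<phi>) \<psi>\<bar> \<le> 0"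
    using cauchy_schwarz[OF koopman_L2[OF assms(2)] assms(1)] assms(3) koopman_norm[OF assms(2)] by simp
  ultimately show ?thesis by (simp add: CK_def)
qed

lemma CK_scale:
  shows "CK \<psi> (\<lambda>x. c * \<phi> x) = (\<lambda>x. c * CK \<psi> \<phi> x)"
proof -
  have "koopman (\<lambda>x. c * \<phi> x) = (\<lambda>x. c * koopman \<phi> x)" by (simp add: koopman_def o_def)
  then show ?thesis by (simp add: CK_def ip_scale algebra_simps)
qed

lemma CL_adj:
  assumes "\<psi> \<in> L2" "\<phi> \<in> L2" "g \<in> L2"
  shows "l2inner (CL \<psi> \<phi>) g = - l2inner \<phi> (CK \<psi> g)"
proof -
  have "l2inner (CL \<psi> \<phi>) g = l2inner \<phi> \<psi> * l2inner (ruelle \<psi>) g - l2inner (ruelle \<phi>) \<psi> * l2inner \<psi> g"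
    unfolding CL_def by (rule ip_lin[OF ruelle_L2[OF assms(1)] assms(1) assms(3)])
  also have "\<dots> = l2inner \<phi> \<psi> * l2inner \<psi> (koopman g) - l2inner \<phi> (koopman \<psi>) * l2inner \<psi> g"
    using adjoint[OF assms(1,3)] adjoint[OF assms(2,1)] by simp
  also have "l2inner \<phi> (CK \<psi> g) = l2inner g \<psi> * l2inner (koopman \<psi>) \<phi> - l2inner (koopman g) \<psi> * l2inner \<psi> \<phi>"
    unfolding CK_def ip_sym[of \<phi>] by (rule ip_lin[OF koopman_L2[OF assms(1)] assms(1) assms(2)])
  ultimately show ?thesis
    using ip_sym[of \<phi> \<psi>] ip_sym[of g \<psi>] ip_sym[of "koopman g" \<psi>] ip_sym[of "koopman \<psi>" \<phi>]
    by (simp add: algebra_simps)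
qed

lemma main_part:
  assumes psi: "\<psi> \<in> L2" and n1: "l2norm \<psi> = 1"
  shows "hopnorm (\<lambda>p. (CK \<psi> (snd p), CL \<psi> (fst p))) = opnorm (CK \<psi>)"
proof -
  define S where "S = {\<phi> \<in> L2. l2norm \<phi> = 1}"
  define a where "a = opnorm (CK \<psi>)"
  have a_def': "a = Sup ((\<lambda>\<phi>. l2norm (CK \<psi> \<phi>)) ` S)" unfolding a_def opnorm_def S_def ..
  have mU: "measure mu UNIV = 1" using prob_space.prob_space[OF prob_mu] by simp
  have one: "(\<lambda>x. 1) \<in> S"
    using L2_one mU by (simp add: S_def l2norm_def l2inner_def)
  have Sne: "S \<noteq> {}" using one by auto
  have bdd: "bdd_above ((\<lambda>\<phi>. l2norm (CK \<psi> \<phi>)) ` S)"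
  proof (rule bdd_aboveI2)
    fix \<phi> assume "\<phi> \<in> S"
    then have ph: "\<phi> \<in> L2" "l2norm \<phi> = 1" by (auto simp: S_def)
    define x where "x = l2inner \<phi> \<psi>"
    define y where "y = l2inner (koopman \<phi>) \<psi>"
    define z where "z = l2inner (koopman \<psi>) \<psi>"
    have x: "\<bar>x\<bar> \<le> 1" using cauchy_schwarz[OF ph(1) psi] ph n1 by (simp add: x_def)
    have y: "\<bar>y\<bar> \<le> 1" using cauchy_schwarz[OF koopman_L2[OF ph(1)] psi] ph n1 koopman_norm[OF ph(1)]
      by (simp add: y_def)
    have z: "\<bar>z\<bar> \<le> 1" using cauchy_schwarz[OF koopman_L2[OF psi] psi] n1 koopman_norm[OF psi]
      by (simp add: z_def)
    have "\<bar>x * y * z\<bar> \<le> 1" unfolding abs_mult using x y z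
      by (simp add: mult_le_one)
    moreover have "x\<^sup>2 \<le> 1" "y\<^sup>2 \<le> 1" using x y by (simp_all add: abs_square_le_1)
    moreover have "2 * x * y * z = 2 * (x * y * z)" by simp
    ultimately have "x\<^sup>2 - 2 * x * y * z + y\<^sup>2 \<le> 4" by (simp only: abs_le_iff) linarith
    then have "sqrt (x\<^sup>2 - 2 * x * y * z + y\<^sup>2) \<le> sqrt 4" by (rule real_sqrt_le_mono)
    then show "l2norm (CK \<psi> \<phi>) \<le> 2"
      using CK_norm[OF psi n1 ph(1)] by (simp add: x_def y_def z_def)
  qed
  have up: "\<And>\<phi>. \<phi> \<in> S \<Longrightarrow> l2norm (CK \<psi> \<phi>) \<le> a"
    unfolding a_def' by (rule cSup_upper[OF _ bdd]) auto
  have a0: "0 \<le> a" using up[OF one] l2norm_nonneg[of "CK \<psi> (\<lambda>x. 1)"] by linarith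
  have bndK: "l2norm (CK \<psi> \<phi>) \<le> a * l2norm \<phi>" if ph: "\<phi> \<in> L2" for \<phi>
  proof (cases "l2norm \<phi> = 0")
    case True
    then show ?thesis using CK_zero[OF psi ph] by (simp add: l2norm_zero)
  next
    case False
    define n where "n = l2norm \<phi>"
    have n: "n > 0" using False l2norm_nonneg[of \<phi>] by (simp add: n_def)
    have "(\<lambda>x. (1 / n) * \<phi> x) \<in> S"
      using L2_scale[OF ph, of "1/n"] l2norm_scale[of "1/n" \<phi>] n by (simp add: S_def n_def)
    then have "l2norm (CK \<psi> (\<lambda>x. (1 / n) * \<phi> x)) \<le> a" by (rule up)
    moreover have "l2norm (CK \<psi> (\<lambda>x. (1 / n) * \<phi> x)) = (1 / n) * l2norm (CK \<psi> \<phi>)"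
      unfolding CK_scale l2norm_scale using n by simp
    ultimately have "(1 / n) * l2norm (CK \<psi> \<phi>) \<le> a" by simp
    then show ?thesis using n by (simp add: n_def field_simps)
  qed
  have bndL: "l2norm (CL \<psi> \<phi>) \<le> a * l2norm \<phi>" if ph: "\<phi> \<in> L2" for \<phi>
  proof -
    define g where "g = CL \<psi> \<phi>"
    have g: "g \<in> L2" unfolding g_def by (rule CL_L2[OF psi ph])
    have "(l2norm g)\<^sup>2 = - l2inner \<phi> (CK \<psi> g)"
      using l2norm_sq[of g] CL_adj[OF psi ph g] by (simp add: g_def)
    also have "\<dots> \<le> l2norm \<phi> * l2norm (CK \<psi> g)"
      using cauchy_schwarz[OF ph CK_L2[OF psi g]] by linarith
    also have "\<dots> \<le> l2norm \<phi> * (a * l2norm g)"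
      by (rule mult_left_mono[OF bndK[OF g] l2norm_nonneg])
    finally have *: "(l2norm g)\<^sup>2 \<le> (a * l2norm \<phi>) * l2norm g" by (simp add: algebra_simps)
    show ?thesis
    proof (cases "l2norm g = 0")
      case True then show ?thesis using a0 l2norm_nonneg[of \<phi>] by (simp add: g_def)
    next
      case False
      then have "l2norm g > 0" using l2norm_nonneg[of g] by simp
      with * show ?thesis by (simp add: power2_eq_square g_def)
    qed
  qed
  define T where "T = {p. fst p \<in> L2 \<and> snd p \<in> L2 \<and> hnorm p = 1}"
  define V where "V = (\<lambda>p. hnorm (CK \<psi> (snd p), CL \<psi> (fst p))) ` T"
  have hdef: "hopnorm (\<lambda>p. (CK \<psi> (snd p), CL \<psi> (fst p))) = Sup V"
    unfolding hopnorm_def V_def T_def by simp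
  have Vle: "v \<le> a" if "v \<in> V" for v
  proof -
    obtain p where p: "p \<in> T" and v: "v = hnorm (CK \<psi> (snd p), CL \<psi> (fst p))"
      using \<open>v \<in> V\<close> by (auto simp: V_def)
    have p1: "fst p \<in> L2" "snd p \<in> L2" and p2: "(l2norm (fst p))\<^sup>2 + (l2norm (snd p))\<^sup>2 = 1"
      using p by (auto simp: T_def hnorm_def)
    have "(l2norm (CK \<psi> (snd p)))\<^sup>2 \<le> (a * l2norm (snd p))\<^sup>2"
      by (rule power_mono[OF bndK[OF p1(2)] l2norm_nonneg])
    moreover have "(l2norm (CL \<psi> (fst p)))\<^sup>2 \<le> (a * l2norm (fst p))\<^sup>2"
      by (rule power_mono[OF bndL[OF p1(1)] l2norm_nonneg])
    ultimately have "(l2norm (CK \<psi> (snd p)))\<^sup>2 + (l2norm (CL \<psi> (fst p)))\<^sup>2 \<le> a\<^sup>2 * ((l2norm (fst p))\<^sup>2 + (l2norm (snd p))\<^sup>2)"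
      by (simp add: power_mult_distrib algebra_simps)
    then have "(l2norm (CK \<psi> (snd p)))\<^sup>2 + (l2norm (CL \<psi> (fst p)))\<^sup>2 \<le> a\<^sup>2" using p2 by simp
    then have "hnorm (CK \<psi> (snd p), CL \<psi> (fst p)) \<le> sqrt (a\<^sup>2)"
      unfolding hnorm_def by (simp only: fst_conv snd_conv) (rule real_sqrt_le_mono)
    then show ?thesis using v a0 by simp
  qed
  have inV: "l2norm (CK \<psi> \<phi>) \<in> V" if "\<phi> \<in> S" for \<phi>
  proof -
    have ph: "\<phi> \<in> L2" "l2norm \<phi> = 1" using that by (auto simp: S_def)
    have CL0: "CL \<psi> (\<lambda>x. 0) = (\<lambda>x. 0)" by (simp add: CL_def ruelle_def l2inner_def)
    have "((\<lambda>x. 0), \<phi>) \<in> T" using ph L2_zero by (simp add: T_def hnorm_def l2norm_zero)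
    moreover have "hnorm (CK \<psi> \<phi>, CL \<psi> (\<lambda>x. 0)) = l2norm (CK \<psi> \<phi>)"
      using CL0 l2norm_nonneg[of "CK \<psi> \<phi>"] by (simp add: hnorm_def l2norm_zero)
    ultimately show ?thesis unfolding V_def by (metis (no_types, lifting) fst_conv image_eqI snd_conv)
  qed
  have Vne: "V \<noteq> {}" using inV[OF one] by auto
  have bddV: "bdd_above V" unfolding bdd_above_def using Vle by blast
  have "Sup V \<le> a" by (rule cSup_least[OF Vne Vle])
  moreover have "a \<le> Sup V"
    unfolding a_def' by (rule cSup_subset_mono) (use Sne inV bddV in auto)
  ultimately show ?thesis using hdef a_def by simp
qed

theorem theorem1p8:
  fixes \<psi> :: "omega \<Rightarrow> real"
  assumes "\<psi> \<in> L2"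
    and "\<not> (\<exists>c. AE x in mu. \<psi> x = c)"
    and "l2norm \<psi> = 1"
  shows "hopnorm (dirac_comm (proj \<psi>)) =
           opnorm (\<lambda>\<phi> x. koopman (proj \<psi> \<phi>) x - proj \<psi> (koopman \<phi>) x)
    \<and> opnorm (\<lambda>\<phi> x. koopman (proj \<psi> \<phi>) x - proj \<psi> (koopman \<phi>) x) =
      Sup ((\<lambda>\<phi>. sqrt ((l2inner \<phi> \<psi>)\<^sup>2
                 - 2 * l2inner \<phi> \<psi> * l2inner (koopman \<phi>) \<psi> * l2inner (koopman \<psi>) \<psi>
                 + (l2inner (koopman \<phi>) \<psi>)\<^sup>2))
           ` {\<phi> \<in> L2. l2norm \<phi> = 1})"
proof
  show "hopnorm (dirac_comm (proj \<psi>)) = opnorm (\<lambda>\<phi> x. koopman (proj \<psi> \<phi>) x - proj \<psi> (koopman \<phi>) x)"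
    unfolding CK_eq comm_eq by (rule main_part[OF assms(1,3)])
  have "(\<lambda>\<phi>. l2norm (CK \<psi> \<phi>)) ` {\<phi> \<in> L2. l2norm \<phi> = 1} =
     (\<lambda>\<phi>. sqrt ((l2inner \<phi> \<psi>)\<^sup>2
                 - 2 * l2inner \<phi> \<psi> * l2inner (koopman \<phi>) \<psi> * l2inner (koopman \<psi>) \<psi>
                 + (l2inner (koopman \<phi>) \<psi>)\<^sup>2)) ` {\<phi> \<in> L2. l2norm \<phi> = 1}"
    by (rule image_cong) (auto simp: CK_norm[OF assms(1,3)])
  then show "opnorm (\<lambda>\<phi> x. koopman (proj \<psi> \<phi>) x - proj \<psi> (koopman \<phi>) x) =
      Sup ((\<lambda>\<phi>. sqrt ((l2inner \<phi> \<psi>)\<^sup>2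
                 - 2 * l2inner \<phi> \<psi> * l2inner (koopman \<phi>) \<psi> * l2inner (koopman \<psi>) \<psi>
                 + (l2inner (koopman \<phi>) \<psi>)\<^sup>2))
           ` {\<phi> \<in> L2. l2norm \<phi> = 1})"
    unfolding CK_eq opnorm_def by simp
qed
end
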